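(* Let $r$ be a constant positive integer and $\varepsilon>0$ a constant. For each $n$, let $L(r,m)=(A\cup B,E)$ be a connected bipartite graph on $m=m(n)$ vertices with bipartition $(A,B)$ such that every vertex in $A$ has at most $r$ neighbors in $B$. If $m=O(n^{1-\varepsilon})$, then $$\lim_{n\to\infty}\frac{\log M_{L(r,m)}(n)}{\binom{n}{2}}=1.$$
   Context: Logarithms are base 2. For graphs $G,G'$ on the same vertex set $[n]$, their symmetric difference $G\oplus G'$ is the graph on $[n]$ whose edge set consists of all edges belonging to exactly one of $G,G'$. For a graph $L$, $M_{L}(n)$ denotes the maximum possible size of a family $\mathcal{G}$ of graphs on vertex set $[n]$ such that for any two distinct $G,G'\in\mathcal{G}$, $G\oplus G'$ contains $L$ as a subgraph. *)

theory Defs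
  imports Complex_Main "HOL-Library.Landau_Symbols"
begin

text \<open>Graphs on vertex set [n] = {1..n} are represented by their edge sets:
  sets of 2-element subsets of {1..n}.\<close>

definition all_edges :: "nat \<Rightarrow> nat set set" where
  "all_edges n = {e. e \<subseteq> {1..n} \<and> card e = 2}"

definition graph_on :: "nat set \<Rightarrow> nat set set \<Rightarrow> bool" where
  "graph_on V E \<longleftrightarrow> E \<subseteq> {e. e \<subseteq> V \<and> card e = 2}"

definition sym_diff :: "nat set set \<Rightarrow> nat set set \<Rightarrow> nat set set" where
  "sym_diff G G' = (G - G') \<union> (G' - G)"

text \<open>The graph L has vertex set {0..<m} and edge set LE.
  G contains L as a subgraph: an injective vertex map sending edges to edges.\<close>
definition contains_subgraph :: "nat set set \<Rightarrow> nat \<Rightarrow> nat \<Rightarrow> nat set set \<Rightarrow> bool" where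
  "contains_subgraph G n m LE \<longleftrightarrow>
     (\<exists>f. inj_on f {0..<m} \<and> f ` {0..<m} \<subseteq> {1..n} \<and> (\<forall>e\<in>LE. f ` e \<in> G))"

definition M_L :: "nat set set \<Rightarrow> nat \<Rightarrow> nat \<Rightarrow> nat" where
  "M_L LE m n = Max {card F | F. F \<subseteq> Pow (all_edges n) \<and>
      (\<forall>G\<in>F. \<forall>G'\<in>F. G \<noteq> G' \<longrightarrow> contains_subgraph (sym_diff G G') n m LE)}"

definition connected_graph :: "nat set \<Rightarrow> nat set set \<Rightarrow> bool" where
  "connected_graph V E \<longleftrightarrow> V \<noteq> {} \<and>
     (\<forall>u\<in>V. \<forall>v\<in>V. (\<lambda>x y. {x, y} \<in> E)\<^sup>*\<^sup>* u v)"

definition bipartition :: "nat set \<Rightarrow> nat set set \<Rightarrow> nat set \<Rightarrow> nat set \<Rightarrow> bool" where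
  "bipartition V E A B \<longleftrightarrow> A \<union> B = V \<and> A \<inter> B = {} \<and>
     (\<forall>e\<in>E. card (e \<inter> A) = 1 \<and> card (e \<inter> B) = 1)"

end

theory Submission
  imports Defs
begin


definition CN :: "nat set set \<Rightarrow> nat set \<Rightarrow> nat set \<Rightarrow> nat set" where
  "CN H V S = {v\<in>V. \<forall>s\<in>S. {s,v} \<in> H}"

lemma embed:
  assumes gr: "graph_on {0..<m} LE" and bp: "bipartition {0..<m} LE A B"
    and deg: "\<And>a. a \<in> A \<Longrightarrow> card {b \<in> B. {a, b} \<in> LE} \<le> r"
    and U: "U \<subseteq> {1..n}" "m \<le> card U"
    and good: "\<And>S. S \<subseteq> U \<Longrightarrow> card S \<le> r \<Longrightarrow> m \<le> card (CN H {1..n} S)"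
  shows "contains_subgraph H n m LE"
proof -
  have AB: "A \<union> B = {0..<m}" "A \<inter> B = {}" and eAB: "\<And>e. e \<in> LE \<Longrightarrow> card (e \<inter> A) = 1 \<and> card (e \<inter> B) = 1"
    using bp unfolding bipartition_def by auto
  have fU: "finite U" using U(1) finite_subset by blast
  have fB: "finite B" using AB by (metis finite_Un finite_atLeastLessThan)
  have fA: "finite A" using AB by (metis finite_Un finite_atLeastLessThan)
  have "card B \<le> m" using AB by (metis card_atLeastLessThan card_mono diff_zero finite_atLeastLessThan sup_ge2)
  then obtain g where g: "g ` B \<subseteq> U" "inj_on g B"
    using card_le_inj[OF fB fU] U(2) by (meson le_trans)
  have claim: "finite A0 \<Longrightarrow> A0 \<subseteq> A \<Longrightarrow> (\<exists>f. inj_on f (B \<union> A0) \<and> f ` (B \<union> A0) \<subseteq> {1..n} \<and> f ` B \<subseteq> U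
      \<and> (\<forall>a\<in>A0. \<forall>b\<in>B. {a,b} \<in> LE \<longrightarrow> {f a, f b} \<in> H))" for A0
  proof (induction A0 rule: finite_induct)
    case empty
    then show ?case using g U(1) by (intro exI[of _ g]) auto
  next
    case (insert a A0)
    then obtain f where f: "inj_on f (B \<union> A0)" "f ` (B \<union> A0) \<subseteq> {1..n}" "f ` B \<subseteq> U"
       "\<forall>a\<in>A0. \<forall>b\<in>B. {a,b} \<in> LE \<longrightarrow> {f a, f b} \<in> H" by auto
    have aA: "a \<in> A" using insert by auto
    have anB: "a \<notin> B" using aA AB by auto
    define S where "S = f ` {b \<in> B. {a, b} \<in> LE}"
    have SU: "S \<subseteq> U" using f(3) S_def by auto
    have "card S \<le> card {b \<in> B. {a, b} \<in> LE}" unfolding S_def by (rule card_image_le) (simp add: fB)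
    then have "card S \<le> r" using deg[OF aA] by linarith
    then have cS: "m \<le> card (CN H {1..n} S)" using good SU by auto
    have sub: "B \<union> A0 \<subseteq> {0..<m} - {a}" using AB insert anB by auto
    have "card (B \<union> A0) \<le> card ({0..<m} - {a})" using sub by (intro card_mono) auto
    also have "\<dots> = m - 1" using aA AB by (subst card_Diff_singleton) auto
    finally have "card (f ` (B \<union> A0)) \<le> m - 1" using card_image_le[of "B \<union> A0" f] fB insert(1) by (meson finite_UnI le_trans)
    moreover have "a \<in> {0..<m}" using aA AB by auto
    then have "m \<ge> 1" by simp
    ultimately have lt: "card (f ` (B \<union> A0)) < card (CN H {1..n} S)" using cS by linarith
    have "\<not> CN H {1..n} S \<subseteq> f ` (B \<union> A0)"
    proof
      assume "CN H {1..n} S \<subseteq> f ` (B \<union> A0)"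
      then have "card (CN H {1..n} S) \<le> card (f ` (B \<union> A0))" by (rule card_mono[rotated]) (simp add: fB insert(1))
      then show False using lt by linarith
    qed
    then obtain v where v: "v \<in> CN H {1..n} S" "v \<notin> f ` (B \<union> A0)" by blast
    define f' where "f' = f(a := v)"
    have "inj_on f' (B \<union> insert a A0)"
      unfolding f'_def using f(1) v(2) insert(2) anB by (auto simp: inj_on_def)
    moreover have "f' ` (B \<union> insert a A0) \<subseteq> {1..n}" using f(2) v(1) unfolding f'_def CN_def by auto
    moreover have "f' ` B \<subseteq> U" using f(3) anB unfolding f'_def by auto
    moreover have "\<forall>a'\<in>insert a A0. \<forall>b\<in>B. {a',b} \<in> LE \<longrightarrow> {f' a', f' b} \<in> H"
    proof (intro ballI impI)
      fix a' b assume a': "a' \<in> insert a A0" and b: "b \<in> B" and e: "{a', b} \<in> LE"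
      show "{f' a', f' b} \<in> H"
      proof (cases "a' = a")
        case True
        then have "f b \<in> S" using S_def b e by auto
        then have "{f b, v} \<in> H" using v(1) unfolding CN_def by auto
        then show ?thesis using True anB b unfolding f'_def by (auto simp: insert_commute)
      next
        case False
        then show ?thesis using f(4) a' b e anB unfolding f'_def by auto
      qed
    qed
    ultimately show ?case by blast
  qed
  obtain f where f: "inj_on f (B \<union> A)" "f ` (B \<union> A) \<subseteq> {1..n}"
      "\<forall>a\<in>A. \<forall>b\<in>B. {a,b} \<in> LE \<longrightarrow> {f a, f b} \<in> H" using claim[OF fA] by blast
  have "\<forall>e\<in>LE. f ` e \<in> H"
  proof
    fix e assume e: "e \<in> LE"
    have "e \<subseteq> {0..<m}" using gr e unfolding graph_on_def by auto
    then have eU: "e = (e \<inter> A) \<union> (e \<inter> B)" using AB by auto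
    obtain a where a: "e \<inter> A = {a}" using eAB[OF e] card_1_singletonE by blast
    obtain b where b: "e \<inter> B = {b}" using eAB[OF e] card_1_singletonE by blast
    have "e = {a, b}" using eU a b by auto
    moreover have "a \<in> A" "b \<in> B" using a b by auto
    ultimately show "f ` e \<in> H" using f(3) e by auto
  qed
  then show ?thesis unfolding contains_subgraph_def using f AB by (metis sup_commute)
qed



lemma card_filter_sum: "finite A \<Longrightarrow> card {x\<in>A. P x} = (\<Sum>x\<in>A. if P x then 1 else (0::nat))"
  by (simp only: card_eq_sum sum.inter_filter)

lemma CN_swap:
  assumes "X \<subseteq> V" "S \<subseteq> V" shows "(S \<subseteq> CN H V X) \<longleftrightarrow> (X \<subseteq> CN H V S)"
proof -
  have 1: "S \<subseteq> CN H V X \<longleftrightarrow> (\<forall>s\<in>S. \<forall>x\<in>X. {x,s} \<in> H)" using assms unfolding CN_def by auto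
  have 2: "X \<subseteq> CN H V S \<longleftrightarrow> (\<forall>x\<in>X. \<forall>s\<in>S. {s,x} \<in> H)" using assms unfolding CN_def by auto
  have 3: "(\<forall>s\<in>S. \<forall>x\<in>X. {x,s} \<in> H) \<longleftrightarrow> (\<forall>x\<in>X. \<forall>s\<in>S. {s,x} \<in> H)" by (auto; metis insert_commute)
  show ?thesis using 1 2 3 by simp
qed

lemma drc:
  fixes H :: "nat set set" and n m r t :: nat
  assumes n1: "n \<ge> 1"
  assumes ineq: "real (card {S. S \<subseteq> {1..n} \<and> card S \<le> r \<and> card (CN H {1..n} S) < m}) * real m ^ t + real m * real n ^ t
      \<le> (\<Sum>v\<in>{1..n}. real (card {s\<in>{1..n}. {s,v} \<in> H}) ^ t)"
  shows "\<exists>U \<subseteq> {1..n}. m \<le> card U \<and> (\<forall>S\<subseteq>U. card S \<le> r \<longrightarrow> m \<le> card (CN H {1..n} S))"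
proof -
  define V where "V = {1..n}"
  define Nb where "Nb v = {s\<in>V. {s,v} \<in> H}" for v
  define Bads where "Bads = {S. S \<subseteq> V \<and> card S \<le> r \<and> card (CN H V S) < m}"
  define Ts where "Ts = {xs. set xs \<subseteq> V \<and> length xs = t}"
  define BT where "BT T = {S \<in> Bads. S \<subseteq> CN H V (set T)}" for T
  have fV: "finite V" unfolding V_def by simp
  have fTs: "finite Ts" unfolding Ts_def using finite_lists_length_eq[OF fV] by simp
  have "card V = n" unfolding V_def by simp
  then have cTs: "card Ts = n ^ t" unfolding Ts_def using card_lists_length_eq[OF fV, of t] by simp
  have "Bads \<subseteq> Pow V" unfolding Bads_def by blast
  moreover have "finite (Pow V)" using fV by (simp only: finite_Pow_iff)
  ultimately have fBads: "finite Bads" by (rule finite_subset)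
  have sym: "\<And>a b. {a,b} \<in> H \<longleftrightarrow> {b,a} \<in> H" by (simp add: insert_commute)
  have CNeq: "CN H V (set T) = {v\<in>V. set T \<subseteq> Nb v}" if "T \<in> Ts" for T
    using that unfolding CN_def Nb_def Ts_def by auto
  have s1: "(\<Sum>T\<in>Ts. card (CN H V (set T))) = (\<Sum>v\<in>V. card (Nb v) ^ t)"
  proof -
    have "(\<Sum>T\<in>Ts. card (CN H V (set T))) = (\<Sum>T\<in>Ts. \<Sum>v\<in>V. if set T \<subseteq> Nb v then 1 else 0)"
      by (rule sum.cong) (auto simp: CNeq card_filter_sum fV)
    also have "\<dots> = (\<Sum>v\<in>V. \<Sum>T\<in>Ts. if set T \<subseteq> Nb v then 1 else 0)" by (rule sum.swap)
    also have "\<dots> = (\<Sum>v\<in>V. card {T\<in>Ts. set T \<subseteq> Nb v})"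
      by (rule sum.cong) (auto simp: card_filter_sum fTs)
    also have "\<dots> = (\<Sum>v\<in>V. card (Nb v) ^ t)"
    proof (rule sum.cong)
      fix v assume "v \<in> V"
      have "{T\<in>Ts. set T \<subseteq> Nb v} = {xs. set xs \<subseteq> Nb v \<and> length xs = t}"
        unfolding Ts_def Nb_def by auto
      moreover have "finite (Nb v)" unfolding Nb_def using fV by simp
      ultimately show "card {T\<in>Ts. set T \<subseteq> Nb v} = card (Nb v) ^ t" by (simp add: card_lists_length_eq)
    qed simp
    finally show ?thesis .
  qed
  have s2: "(\<Sum>T\<in>Ts. card (BT T)) \<le> card Bads * m ^ t"
  proof -
    have "(\<Sum>T\<in>Ts. card (BT T)) = (\<Sum>T\<in>Ts. \<Sum>S\<in>Bads. if S \<subseteq> CN H V (set T) then 1 else 0)"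
      by (rule sum.cong) (auto simp: BT_def card_filter_sum fBads)
    also have "\<dots> = (\<Sum>S\<in>Bads. \<Sum>T\<in>Ts. if S \<subseteq> CN H V (set T) then 1 else 0)" by (rule sum.swap)
    also have "\<dots> = (\<Sum>S\<in>Bads. card {T\<in>Ts. S \<subseteq> CN H V (set T)})"
      by (rule sum.cong) (auto simp: card_filter_sum fTs)
    also have "\<dots> \<le> (\<Sum>S\<in>Bads. m ^ t)"
    proof (rule sum_mono)
      fix S assume S: "S \<in> Bads"
      have SV: "S \<subseteq> V" using S unfolding Bads_def by simp
      have CV: "CN H V S \<subseteq> V" unfolding CN_def by auto
      have "{T\<in>Ts. S \<subseteq> CN H V (set T)} = {xs. set xs \<subseteq> CN H V S \<and> length xs = t}"
      proof (intro set_eqI iffI)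
        fix xs assume "xs \<in> {T\<in>Ts. S \<subseteq> CN H V (set T)}"
        then have "set xs \<subseteq> V" "length xs = t" "S \<subseteq> CN H V (set xs)" unfolding Ts_def by auto
        then show "xs \<in> {xs. set xs \<subseteq> CN H V S \<and> length xs = t}" using CN_swap[of "set xs" V S H] SV by simp
      next
        fix xs assume "xs \<in> {xs. set xs \<subseteq> CN H V S \<and> length xs = t}"
        then have a: "set xs \<subseteq> CN H V S" "length xs = t" by auto
        then have "set xs \<subseteq> V" using CV by blast
        then show "xs \<in> {T\<in>Ts. S \<subseteq> CN H V (set T)}" using CN_swap[of "set xs" V S H] SV a unfolding Ts_def by simp
      qed
      moreover have "finite (CN H V S)" unfolding CN_def using fV by simp
      ultimately have "card {T\<in>Ts. S \<subseteq> CN H V (set T)} = card (CN H V S) ^ t" by (simp add: card_lists_length_eq)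
      moreover have "card (CN H V S) \<le> m" using S unfolding Bads_def by simp
      ultimately show "card {T\<in>Ts. S \<subseteq> CN H V (set T)} \<le> m ^ t" by (simp add: power_mono)
    qed
    finally show ?thesis by simp
  qed
  have "\<exists>T\<in>Ts. card (BT T) + m \<le> card (CN H V (set T))"
  proof (rule ccontr)
    assume "\<not> ?thesis"
    then have "\<forall>T\<in>Ts. card (CN H V (set T)) + 1 \<le> card (BT T) + m" by auto
    then have "(\<Sum>T\<in>Ts. card (CN H V (set T)) + 1) \<le> (\<Sum>T\<in>Ts. card (BT T) + m)" by (intro sum_mono) auto
    moreover have "(\<Sum>T\<in>Ts. card (CN H V (set T)) + 1) = (\<Sum>T\<in>Ts. card (CN H V (set T))) + n ^ t"
      unfolding sum.distrib by (simp add: cTs)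
    moreover have "(\<Sum>T\<in>Ts. card (BT T) + m) = (\<Sum>T\<in>Ts. card (BT T)) + m * n ^ t"
      unfolding sum.distrib by (simp add: cTs)
    ultimately have "(\<Sum>T\<in>Ts. card (CN H V (set T))) + n ^ t \<le> (\<Sum>T\<in>Ts. card (BT T)) + m * n ^ t"
      by linarith
    then have "(\<Sum>v\<in>V. card (Nb v) ^ t) + n ^ t \<le> card Bads * m ^ t + m * n ^ t" using s1 s2 by linarith
    then have "real ((\<Sum>v\<in>V. card (Nb v) ^ t) + n ^ t) \<le> real (card Bads * m ^ t + m * n ^ t)" by linarith
    then have "(\<Sum>v\<in>V. real (card (Nb v)) ^ t) + real n ^ t \<le> real (card Bads) * real m ^ t + real m * real n ^ t"
      by simp
    moreover have "real n ^ t > 0" using n1 by simp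
    ultimately show False using ineq unfolding V_def Nb_def Bads_def by linarith
  qed
  then obtain T where T: "T \<in> Ts" "card (BT T) + m \<le> card (CN H V (set T))" by blast
  define W where "W = CN H V (set T)"
  define U where "U = W - (\<lambda>S. SOME x. x \<in> S) ` BT T"
  have WV: "W \<subseteq> V" unfolding W_def CN_def by auto
  have fW: "finite W" using WV fV finite_subset by blast
  have fBT: "finite (BT T)" unfolding BT_def using fBads by simp
  have "card W - card ((\<lambda>S. SOME x. x \<in> S) ` BT T) \<le> card U"
    unfolding U_def by (rule diff_card_le_card_Diff) (simp add: fBT)
  moreover have "card ((\<lambda>S. SOME x. x \<in> S) ` BT T) \<le> card (BT T)" by (rule card_image_le[OF fBT])
  moreover have "card (BT T) + m \<le> card W" using T(2) W_def by simp
  ultimately have mU: "m \<le> card U" by linarith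
  have "card W \<le> card V" using WV fV card_mono by blast
  then have nm: "m \<le> n" using T(2) W_def V_def by simp
  have UV: "U \<subseteq> V" using WV U_def by auto
  have "\<forall>S\<subseteq>U. card S \<le> r \<longrightarrow> m \<le> card (CN H V S)"
  proof (intro allI impI)
    fix S assume S: "S \<subseteq> U" "card S \<le> r"
    show "m \<le> card (CN H V S)"
    proof (rule ccontr)
      assume c: "\<not> ?thesis"
      show False
      proof (cases "S = {}")
        case True
        then have "CN H V S = V" unfolding CN_def by auto
        then show False using c nm V_def by simp
      next
        case False
        then have x: "(SOME x. x \<in> S) \<in> S" by (simp add: some_in_eq)
        have "S \<in> BT T" unfolding BT_def Bads_def using S c UV U_def W_def by auto
        then have "(SOME x. x \<in> S) \<notin> U" unfolding U_def by auto
        then show False using x S by auto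
      qed
    qed
  qed
  then show ?thesis using UV mU unfolding V_def by blast
qed



lemma finite_all_edges: "finite (all_edges n)"
proof -
  have "all_edges n \<subseteq> Pow {1..n}" unfolding all_edges_def by blast
  moreover have "finite (Pow {1..n})" by simp
  ultimately show ?thesis by (rule finite_subset)
qed

lemma handshake:
  assumes HE: "H \<subseteq> all_edges n"
  shows "(\<Sum>v\<in>{1..n}. card {s\<in>{1..n}. {s,v} \<in> H}) = 2 * card H"
proof -
  have fH: "finite H" using HE finite_all_edges finite_subset by blast
  have c: "card {s\<in>{1..n}. {s,v} \<in> H} = card {e\<in>H. v \<in> e}" for v
  proof -
    have img: "(\<lambda>s. {s,v}) ` {s\<in>{1..n}. {s,v} \<in> H} = {e\<in>H. v \<in> e}"
    proof
      show "(\<lambda>s. {s,v}) ` {s\<in>{1..n}. {s,v} \<in> H} \<subseteq> {e\<in>H. v \<in> e}" by auto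
      show "{e\<in>H. v \<in> e} \<subseteq> (\<lambda>s. {s,v}) ` {s\<in>{1..n}. {s,v} \<in> H}"
      proof
        fix e assume "e \<in> {e\<in>H. v \<in> e}"
        then have e: "e \<in> H" "v \<in> e" by auto
        then have "e \<subseteq> {1..n}" "card e = 2" using HE unfolding all_edges_def by auto
        then obtain x y where xy: "e = {x,y}" "x \<noteq> y" by (auto simp: card_2_iff)
        show "e \<in> (\<lambda>s. {s,v}) ` {s\<in>{1..n}. {s,v} \<in> H}"
        proof (cases "v = x")
          case True
          then have "e = {y, v}" using xy by auto
          then show ?thesis using e \<open>e \<subseteq> {1..n}\<close> by auto
        next
          case False
          then have "v = y" using xy e by auto
          then have "e = {x, v}" using xy by auto
          then show ?thesis using e \<open>e \<subseteq> {1..n}\<close> by auto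
        qed
      qed
    qed
    have inj: "inj_on (\<lambda>s. {s,v}) {s\<in>{1..n}. {s,v} \<in> H}"
      by (auto simp: inj_on_def doubleton_eq_iff)
    show ?thesis using card_image[OF inj] img by simp
  qed
  have "(\<Sum>v\<in>{1..n}. card {s\<in>{1..n}. {s,v} \<in> H}) = (\<Sum>v\<in>{1..n}. \<Sum>e\<in>H. if v \<in> e then 1 else 0)"
    by (rule sum.cong) (simp_all only: c card_filter_sum fH)
  also have "\<dots> = (\<Sum>e\<in>H. \<Sum>v\<in>{1..n}. if v \<in> e then 1 else 0)" by (rule sum.swap)
  also have "\<dots> = (\<Sum>e\<in>H. card {v\<in>{1..n}. v \<in> e})"
    by (rule sum.cong) (simp_all only: card_filter_sum finite_atLeastAtMost)
  also have "\<dots> = (\<Sum>e\<in>H. 2)"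
  proof (rule sum.cong)
    fix e assume "e \<in> H"
    then have "e \<subseteq> {1..n}" "card e = 2" using HE unfolding all_edges_def by auto
    moreover have "{v\<in>{1..n}. v \<in> e} = e" using calculation by auto
    ultimately show "card {v\<in>{1..n}. v \<in> e} = 2" by simp
  qed simp
  finally show ?thesis by simp
qed

lemma deg_sum_bound:
  fixes d :: "nat \<Rightarrow> nat" and V :: "nat set" and n t :: nat and \<alpha> :: real
  assumes fV: "finite V" and cV: "card V = n" and dn: "\<And>v. v \<in> V \<Longrightarrow> d v \<le> n"
    and sumd: "\<alpha> * real n * (real n - 1) \<le> (\<Sum>v\<in>V. real (d v))"
    and n2: "n \<ge> 2" and a0: "0 < \<alpha>"
  shows "(\<alpha>/4) ^ (t+1) * real n ^ (t+1) \<le> (\<Sum>v\<in>V. real (d v) ^ t)"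
proof -
  define D where "D = {v\<in>V. \<alpha>/4 * real n \<le> real (d v)}"
  have fD: "finite D" using fV D_def by simp
  have DV: "D \<subseteq> V" using D_def by auto
  have "(\<Sum>v\<in>V. real (d v)) = (\<Sum>v\<in>D. real (d v)) + (\<Sum>v\<in>V-D. real (d v))"
    using fV DV by (metis sum.subset_diff add.commute)
  also have "(\<Sum>v\<in>D. real (d v)) \<le> (\<Sum>v\<in>D. real n)" using dn DV by (intro sum_mono) auto
  also have "(\<Sum>v\<in>V-D. real (d v)) \<le> (\<Sum>v\<in>V-D. \<alpha>/4 * real n)" unfolding D_def by (intro sum_mono) auto
  also have "(\<Sum>v\<in>V-D. \<alpha>/4 * real n) = real (card (V - D)) * (\<alpha>/4 * real n)" by simp
  also have "\<dots> \<le> real n * (\<alpha>/4 * real n)"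
  proof -
    have "card (V - D) \<le> n" using cV fV by (metis card_mono Diff_subset)
    then show ?thesis using a0 by (intro mult_right_mono) auto
  qed
  finally have "\<alpha> * real n * (real n - 1) \<le> real (card D) * real n + real n * (\<alpha>/4 * real n)"
    using sumd by simp
  moreover have "\<alpha> * real n * (real n - 1) \<ge> \<alpha> * real n * (real n / 2)"
    using n2 a0 by (intro mult_left_mono) auto
  ultimately have "\<alpha> * real n * (real n / 4) \<le> real (card D) * real n" by (simp add: algebra_simps)
  then have cD: "\<alpha> * real n / 4 \<le> real (card D)" using n2 by (simp add: field_simps)
  have "(\<alpha>/4) ^ (t+1) * real n ^ (t+1) = (\<alpha> * real n / 4) * (\<alpha>/4 * real n) ^ t"
    by (simp add: power_mult_distrib field_simps)
  also have "\<dots> \<le> real (card D) * (\<alpha>/4 * real n) ^ t"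
    using cD a0 by (intro mult_right_mono) auto
  also have "\<dots> = (\<Sum>v\<in>D. (\<alpha>/4 * real n) ^ t)" by simp
  also have "\<dots> \<le> (\<Sum>v\<in>D. real (d v) ^ t)"
    using a0 by (intro sum_mono power_mono) (auto simp: D_def)
  also have "\<dots> \<le> (\<Sum>v\<in>V. real (d v) ^ t)"
    using DV fV by (intro sum_mono2) auto
  finally show ?thesis .
qed

lemma small_sets_card:
  assumes "n \<ge> 1"
  shows "card {S. S \<subseteq> {1..n} \<and> card S \<le> r} \<le> (r+1) * n ^ r"
proof -
  have "{S. S \<subseteq> {1..n} \<and> card S \<le> r} \<subseteq> set ` {xs. set xs \<subseteq> {1..n} \<and> length xs \<le> r}"
  proof
    fix S assume S: "S \<in> {S. S \<subseteq> {1..n} \<and> card S \<le> r}"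
    then have fS: "finite S" using finite_subset by auto
    have "S = set (sorted_list_of_set S)" using fS by simp
    moreover have "length (sorted_list_of_set S) \<le> r" using S by simp
    ultimately show "S \<in> set ` {xs. set xs \<subseteq> {1..n} \<and> length xs \<le> r}" using S by (intro image_eqI) auto
  qed
  then have "card {S. S \<subseteq> {1..n} \<and> card S \<le> r} \<le> card (set ` {xs. set xs \<subseteq> {1..n} \<and> length xs \<le> r})"
    by (rule card_mono[rotated]) (simp add: finite_lists_length_le)
  also have "\<dots> \<le> card {xs. set xs \<subseteq> {1..n} \<and> length xs \<le> r}"
    by (rule card_image_le) (simp add: finite_lists_length_le)
  also have "\<dots> = (\<Sum>i\<le>r. n ^ i)" using card_lists_length_le[of "{1..n}" r] by simp
  also have "\<dots> \<le> (\<Sum>i\<le>r. n ^ r)" using assms by (intro sum_mono power_increasing) auto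
  also have "\<dots> = (r+1) * n ^ r" by simp
  finally show ?thesis .
qed

lemma weighted_pow_sum:
  fixes a :: real
  assumes "finite E"
  shows "(\<Sum>H\<in>Pow E. a ^ card H) = (1 + a) ^ card E"
  using assms
proof (induction E rule: finite_induct)
  case empty
  then show ?case by simp
next
  case (insert x F)
  have disj: "Pow F \<inter> insert x ` Pow F = {}" using insert(2) by auto
  have inj: "inj_on (insert x) (Pow F)" using insert(2) by (auto simp: inj_on_def)
  have "(\<Sum>H\<in>Pow (insert x F). a ^ card H) = (\<Sum>H\<in>Pow F. a ^ card H) + (\<Sum>H\<in>insert x ` Pow F. a ^ card H)"
    unfolding Pow_insert using disj insert(1) by (intro sum.union_disjoint) auto
  also have "(\<Sum>H\<in>insert x ` Pow F. a ^ card H) = (\<Sum>H\<in>Pow F. a ^ card (insert x H))"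
    using inj by (simp add: sum.reindex)
  also have "\<dots> = (\<Sum>H\<in>Pow F. a * a ^ card H)"
  proof (rule sum.cong)
    fix H assume "H \<in> Pow F"
    then have "finite H" "x \<notin> H" using insert(1,2) finite_subset by auto
    then show "a ^ card (insert x H) = a * a ^ card H" by simp
  qed simp
  also have "\<dots> = a * (\<Sum>H\<in>Pow F. a ^ card H)" by (simp add: sum_distrib_left)
  finally show ?case using insert by (simp add: algebra_simps)
qed

lemma small_count:
  fixes a K :: real
  assumes fE: "finite E" and a: "0 < a" "a \<le> 1"
  shows "real (card {H\<in>Pow E. real (card H) < K}) * a powr K \<le> exp (a * real (card E))"
proof -
  let ?S = "{H\<in>Pow E. real (card H) < K}"
  have "real (card ?S) * a powr K = (\<Sum>H\<in>?S. a powr K)" by simp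
  also have "\<dots> \<le> (\<Sum>H\<in>?S. a ^ card H)"
  proof (rule sum_mono)
    fix H assume "H \<in> ?S"
    then have "real (card H) \<le> K" by simp
    then have "a powr K \<le> a powr (real (card H))" using a by (intro powr_mono') auto
    then show "a powr K \<le> a ^ card H" using a by (simp add: powr_realpow)
  qed
  also have "\<dots> \<le> (\<Sum>H\<in>Pow E. a ^ card H)" using fE a by (intro sum_mono2) auto
  also have "\<dots> = (1 + a) ^ card E" using weighted_pow_sum[OF fE] by simp
  also have "\<dots> \<le> exp a ^ card E" using a by (intro power_mono) auto
  also have "\<dots> = exp (a * real (card E))" by (simp add: exp_of_nat_mult[symmetric] mult.commute)
  finally show ?thesis .
qed



lemma sym_diff_commute: "sym_diff G G' = sym_diff G' G"
  unfolding sym_diff_def by blast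

lemma GV:
  fixes LE :: "nat set set" and m n :: nat
  defines "E \<equiv> all_edges n"
  defines "Bad \<equiv> {X\<in>Pow E. \<not> contains_subgraph X n m LE}"
  shows "2 ^ card E \<le> M_L LE m n * (card Bad + 1)" and "M_L LE m n \<le> 2 ^ card E"
proof -
  define valid where "valid F \<longleftrightarrow> (\<forall>G\<in>F. \<forall>G'\<in>F. G \<noteq> G' \<longrightarrow> contains_subgraph (sym_diff G G') n m LE)" for F
  define Cs where "Cs = {card F | F. F \<subseteq> Pow E \<and> valid F}"
  have hML: "M_L LE m n = Max Cs" unfolding M_L_def Cs_def valid_def E_def by simp
  have fE: "finite E" unfolding E_def by (rule finite_all_edges)
  have cle: "card F \<le> 2 ^ card E" if "F \<subseteq> Pow E" for F
  proof -
    have "card F \<le> card (Pow E)" using that fE by (intro card_mono) auto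
    then show ?thesis by (simp add: card_Pow fE)
  qed
  have sub: "Cs \<subseteq> {..2 ^ card E}"
  proof
    fix c assume "c \<in> Cs"
    then obtain F where "c = card F" "F \<subseteq> Pow E" unfolding Cs_def by blast
    then show "c \<in> {..2 ^ card E}" using cle by simp
  qed
  have fCs: "finite Cs" using finite_subset[OF sub finite_atMost] .
  have "valid {}" unfolding valid_def by simp
  then have "card {} \<in> Cs" unfolding Cs_def mem_Collect_eq by (intro exI[of _ "{}"]) simp
  then have neCs: "Cs \<noteq> {}" by blast
  have "Max Cs \<in> Cs" using Max_in[OF fCs neCs] .
  then have "\<exists>F. Max Cs = card F \<and> F \<subseteq> Pow E \<and> valid F" unfolding Cs_def by simp
  then obtain F0 where F0: "F0 \<subseteq> Pow E" "valid F0" "card F0 = Max Cs" by auto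
  have fF0: "finite F0" using finite_subset[OF F0(1)] fE by simp
  have maxF: "card F \<le> Max Cs" if "F \<subseteq> Pow E" "valid F" for F
  proof -
    have "card F \<in> Cs" unfolding Cs_def using that by blast
    then show ?thesis using Max_ge[OF fCs] by simp
  qed
  have "Max Cs \<le> 2 ^ card E" using F0(3) cle[OF F0(1)] by simp
  then show "M_L LE m n \<le> 2 ^ card E" using hML by simp
  have cover: "Pow E \<subseteq> (\<lambda>(G,Y). sym_diff G Y) ` (F0 \<times> insert {} Bad)"
  proof
    fix X assume X: "X \<in> Pow E"
    show "X \<in> (\<lambda>(G,Y). sym_diff G Y) ` (F0 \<times> insert {} Bad)"
    proof (cases "X \<in> F0")
      case True
      have "sym_diff X {} = X" unfolding sym_diff_def by simp
      then show ?thesis using True by (intro image_eqI[of _ _ "(X, {})"]) auto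
    next
      case False
      have "insert X F0 \<subseteq> Pow E" using X F0(1) by auto
      moreover have "card (insert X F0) > Max Cs" using False fF0 F0(3) by simp
      ultimately have "\<not> valid (insert X F0)" using maxF[of "insert X F0"] by linarith
      then obtain G G' where GG: "G \<in> insert X F0" "G' \<in> insert X F0" "G \<noteq> G'"
        "\<not> contains_subgraph (sym_diff G G') n m LE" unfolding valid_def by blast
      have "\<exists>G\<in>F0. \<not> contains_subgraph (sym_diff X G) n m LE"
      proof (cases "G = X")
        case True
        then have "G' \<in> F0" using GG by auto
        then show ?thesis using GG True by blast
      next
        case False
        then have G: "G \<in> F0" using GG by auto
        show ?thesis
        proof (cases "G' = X")
          case True
          then show ?thesis using G GG sym_diff_commute by metis
        next
          case False
          then have "G' \<in> F0" using GG by auto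
          then show ?thesis using G GG F0(2) unfolding valid_def by blast
        qed
      qed
      then obtain G where G: "G \<in> F0" "\<not> contains_subgraph (sym_diff X G) n m LE" by blast
      have "sym_diff X G \<in> Pow E" using X G(1) F0(1) unfolding sym_diff_def by auto
      then have Y: "sym_diff X G \<in> Bad" unfolding Bad_def using G(2) by simp
      have "sym_diff G (sym_diff X G) = X" unfolding sym_diff_def by blast
      then show ?thesis using G(1) Y by (intro image_eqI[of _ _ "(G, sym_diff X G)"]) auto
    qed
  qed
  have fBad: "finite Bad" unfolding Bad_def using fE by simp
  have "2 ^ card E = card (Pow E)" by (simp add: card_Pow fE)
  also have "\<dots> \<le> card ((\<lambda>(G,Y). sym_diff G Y) ` (F0 \<times> insert {} Bad))"
    using cover fF0 fBad by (intro card_mono) auto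
  also have "\<dots> \<le> card (F0 \<times> insert {} Bad)" by (rule card_image_le) (simp add: fF0 fBad)
  also have "\<dots> = card F0 * card (insert {} Bad)" by (rule card_cartesian_product)
  also have "\<dots> \<le> card F0 * (card Bad + 1)" by (intro mult_left_mono) (simp_all add: card_insert_le_m1 fBad card_insert_if)
  finally show "2 ^ card E \<le> M_L LE m n * (card Bad + 1)" using hML F0(3) by simp
qed



lemma two_choose: "2 * real (n choose 2) = real n * (real n - 1)"
proof (cases "n \<ge> 1")
  case True
  have "even (n * (n - 1))" by (cases "even n") auto
  then have "2 * (n choose 2) = n * (n - 1)" by (simp add: choose_two)
  then have "real (2 * (n choose 2)) = real (n * (n - 1))" by (simp only:)
  then show ?thesis using True by (simp add: of_nat_diff)
next
  case False
  then have "n = 0" by simp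
  then show ?thesis by simp
qed

lemma numeric_eventually:
  fixes K C c \<epsilon> :: real
  assumes "0 < c" "0 < \<epsilon>"
  shows "eventually (\<lambda>n::nat. K / real n + C * real n powr (- \<epsilon>) < c) sequentially"
proof -
  have "(\<lambda>n::nat. real n powr (- \<epsilon>)) \<longlonglongrightarrow> 0"
    by (rule tendsto_neg_powr) (use assms in \<open>simp_all add: filterlim_real_sequentially\<close>)
  then have "(\<lambda>n::nat. K / real n + C * real n powr (- \<epsilon>)) \<longlonglongrightarrow> 0 + C * 0"
    by (intro tendsto_add tendsto_mult lim_const_over_n tendsto_const)
  then show ?thesis using assms(1) by (simp add: order_tendstoD(2))
qed

lemma density:
  fixes r :: nat and \<epsilon> \<alpha> C :: real and m :: "nat \<Rightarrow> nat" and LE :: "nat \<Rightarrow> nat set set" and A B :: "nat \<Rightarrow> nat set"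
  assumes eps: "\<epsilon> > 0" and a0: "\<alpha> > 0" and C0: "C > 0"
    and gr: "\<And>n. graph_on {0..<m n} (LE n)"
    and bp: "\<And>n. bipartition {0..<m n} (LE n) (A n) (B n)"
    and deg: "\<And>n a. a \<in> A n \<Longrightarrow> card {b \<in> B n. {a, b} \<in> LE n} \<le> r"
    and mb: "eventually (\<lambda>n. real (m n) \<le> C * real n powr (1 - \<epsilon>)) sequentially"
  shows "eventually (\<lambda>n. \<forall>H. H \<subseteq> all_edges n \<longrightarrow> \<alpha> * real (n choose 2) \<le> real (card H)
            \<longrightarrow> contains_subgraph H n (m n) (LE n)) sequentially"
proof -
  define t where "t = nat \<lceil>real r / \<epsilon>\<rceil>"
  have rt: "real r \<le> \<epsilon> * real t"
  proof -
    have "real r / \<epsilon> \<le> real t" unfolding t_def by linarith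
    then show ?thesis using eps by (simp add: field_simps)
  qed
  define c where "c = (\<alpha>/4) ^ (t+1)"
  define K where "K = real (r+1) * C ^ t"
  have c0: "c > 0" unfolding c_def using a0 by simp
  have ev: "eventually (\<lambda>n. n \<ge> 2 \<and> real (m n) \<le> C * real n powr (1 - \<epsilon>)
      \<and> K / real n + C * real n powr (- \<epsilon>) < c) sequentially"
    using eventually_ge_at_top[of 2] mb numeric_eventually[OF c0 eps, of K C]
    by eventually_elim auto
  show ?thesis using ev
  proof eventually_elim
    case (elim n)
    then have n2: "n \<ge> 2" and mn: "real (m n) \<le> C * real n powr (1 - \<epsilon>)"
      and small: "K / real n + C * real n powr (- \<epsilon>) < c" by auto
    define x where "x = real n"
    have x1: "x \<ge> 1" "x > 0" using n2 x_def by auto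
    show ?case
    proof (intro allI impI)
      fix H assume HE: "H \<subseteq> all_edges n" and Hc: "\<alpha> * real (n choose 2) \<le> real (card H)"
      define d where "d v = card {s\<in>{1..n}. {s,v} \<in> H}" for v
      have dn: "d v \<le> n" for v
      proof -
        have "d v \<le> card {1..n}" unfolding d_def by (rule card_mono) auto
        then show ?thesis by simp
      qed
      have "(\<Sum>v\<in>{1..n}. real (d v)) = real (2 * card H)"
        unfolding d_def using handshake[OF HE] by (simp only: of_nat_sum[symmetric])
      also have "\<dots> \<ge> \<alpha> * real n * (real n - 1)"
      proof -
        have "\<alpha> * real n * (real n - 1) = \<alpha> * (2 * real (n choose 2))" by (simp only: two_choose mult.assoc)
        moreover have "real (2 * card H) = 2 * real (card H)" by simp
        ultimately show ?thesis using Hc by linarith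
      qed
      finally have sumd: "\<alpha> * real n * (real n - 1) \<le> (\<Sum>v\<in>{1..n}. real (d v))" .
      have lower: "c * x ^ (t+1) \<le> (\<Sum>v\<in>{1..n}. real (d v) ^ t)"
        unfolding c_def x_def
        by (rule deg_sum_bound[OF _ _ _ sumd n2 a0]) (simp_all add: dn)
      define Bads where "Bads = {S. S \<subseteq> {1..n} \<and> card S \<le> r \<and> card (CN H {1..n} S) < m n}"
      have "Bads \<subseteq> {S. S \<subseteq> {1..n} \<and> card S \<le> r}" unfolding Bads_def by blast
      then have "card Bads \<le> card {S. S \<subseteq> {1..n} \<and> card S \<le> r}"
        by (rule card_mono[rotated]) simp
      also have "\<dots> \<le> (r+1) * n ^ r" using small_sets_card n2 by simp
      finally have cB: "real (card Bads) \<le> real (r+1) * x ^ r" unfolding x_def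
        by (metis of_nat_le_iff of_nat_mult of_nat_power)
      have m0: "0 \<le> real (m n)" by simp
      have mt: "real (m n) ^ t \<le> C ^ t * x powr ((1 - \<epsilon>) * real t)"
      proof -
        have "real (m n) ^ t \<le> (C * x powr (1 - \<epsilon>)) ^ t" using mn m0 x_def by (intro power_mono) auto
        also have "\<dots> = C ^ t * x powr ((1 - \<epsilon>) * real t)"
          using x1 by (simp add: power_mult_distrib powr_power mult.commute)
        finally show ?thesis .
      qed
      have t1: "real (card Bads) * real (m n) ^ t \<le> K / x * x ^ (t+1)"
      proof -
        have "real (card Bads) * real (m n) ^ t \<le> (real (r+1) * x ^ r) * (C ^ t * x powr ((1 - \<epsilon>) * real t))"
          using cB mt by (intro mult_mono) auto
        also have "\<dots> = K * (x powr real r * x powr ((1 - \<epsilon>) * real t))"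
          using x1 by (simp add: K_def powr_realpow)
        also have "\<dots> = K * x powr (real r + (1 - \<epsilon>) * real t)" by (simp add: powr_add)
        also have "\<dots> \<le> K * x powr (real t)"
          using rt x1 C0 unfolding K_def by (intro mult_left_mono powr_mono) (auto simp: algebra_simps)
        also have "\<dots> = K / x * x ^ (t+1)" using x1 by (simp add: powr_realpow)
        finally show ?thesis .
      qed
      have t2: "real (m n) * x ^ t \<le> C * x powr (- \<epsilon>) * x ^ (t+1)"
      proof -
        have "real (m n) * x ^ t \<le> C * x powr (1 - \<epsilon>) * x ^ t" using mn x_def by (intro mult_right_mono) auto
        also have "\<dots> = C * x powr (- \<epsilon>) * x ^ (t+1)"
        proof -
          have "x powr (- \<epsilon>) * x = x powr (- \<epsilon>) * x powr 1" using x1 by simp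
          also have "\<dots> = x powr (- \<epsilon> + 1)" by (simp only: powr_add)
          also have "- \<epsilon> + 1 = 1 - \<epsilon>" by simp
          finally have "x powr (1 - \<epsilon>) = x powr (- \<epsilon>) * x" by simp
          then show ?thesis by simp
        qed
        finally show ?thesis .
      qed
      have "real (card Bads) * real (m n) ^ t + real (m n) * real n ^ t
          \<le> (K / x + C * x powr (- \<epsilon>)) * x ^ (t+1)"
        using t1 t2 x_def by (simp add: algebra_simps)
      also have "\<dots> \<le> c * x ^ (t+1)" using small x_def x1 by (intro mult_right_mono) auto
      also have "\<dots> \<le> (\<Sum>v\<in>{1..n}. real (d v) ^ t)" by (rule lower)
      finally have ineq: "real (card Bads) * real (m n) ^ t + real (m n) * real n ^ t
          \<le> (\<Sum>v\<in>{1..n}. real (card {s\<in>{1..n}. {s,v} \<in> H}) ^ t)" unfolding d_def .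
      obtain U where U: "U \<subseteq> {1..n}" "m n \<le> card U"
          "\<forall>S\<subseteq>U. card S \<le> r \<longrightarrow> m n \<le> card (CN H {1..n} S)"
        using drc[of n r H "m n" t] ineq n2 unfolding Bads_def by auto
      show "contains_subgraph H n (m n) (LE n)"
        using embed[OF gr bp deg U(1) U(2)] U(3) by blast
    qed
  qed
qed



lemma choose_param:
  fixes e :: real assumes e: "e > 0"
  obtains \<alpha> where "0 < \<alpha>" "\<alpha> \<le> 1" "\<alpha> * (1 - ln \<alpha>) / ln 2 \<le> e / 4"
proof -
  define s where "s = min 1 (e * ln 2 / 12)"
  have l2: "ln (2::real) > 0" by simp
  have s0: "s > 0" unfolding s_def using e l2 by simp
  have s1: "s \<le> 1" unfolding s_def by simp
  have se: "3 * s \<le> e * ln 2 / 4" unfolding s_def by linarith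
  define \<alpha> where "\<alpha> = s ^ 2"
  have a0: "\<alpha> > 0" unfolding \<alpha>_def using s0 by simp
  have a1: "\<alpha> \<le> 1" unfolding \<alpha>_def using s0 s1 by (simp add: power_le_one)
  have "ln \<alpha> = 2 * ln s" unfolding \<alpha>_def using s0 by (simp add: ln_realpow)
  moreover have "ln (1 / s) \<le> 1 / s - 1" using s0 by (intro ln_le_minus_one) simp
  moreover have "ln (1 / s) = - ln s" using s0 by (simp add: ln_div)
  ultimately have "- ln \<alpha> \<le> 2 / s" by (simp add: field_simps)
  then have "\<alpha> * (- ln \<alpha>) \<le> \<alpha> * (2 / s)" using a0 by (intro mult_left_mono) auto
  also have "\<alpha> * (2 / s) = 2 * s" unfolding \<alpha>_def using s0 by (simp add: power2_eq_square)
  finally have "\<alpha> * (1 - ln \<alpha>) \<le> \<alpha> + 2 * s" by (simp add: algebra_simps)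
  also have "\<alpha> \<le> s" unfolding \<alpha>_def using s0 s1 by (simp add: power2_eq_square mult_le_cancel_right1)
  finally have "\<alpha> * (1 - ln \<alpha>) \<le> e * ln 2 / 4" using se by linarith
  then have "\<alpha> * (1 - ln \<alpha>) / ln 2 \<le> e / 4" using l2 by (simp add: divide_simps)
  then show ?thesis using that a0 a1 by blast
qed

lemma final_bound:
  fixes \<alpha> :: real and n :: nat and LE :: "nat set set" and m :: nat
  assumes a0: "0 < \<alpha>" and a1: "\<alpha> \<le> 1" and n2: "n \<ge> 2"
    and dens: "\<forall>H. H \<subseteq> all_edges n \<longrightarrow> \<alpha> * real (n choose 2) \<le> real (card H) \<longrightarrow> contains_subgraph H n m LE"
  shows "log 2 (real (M_L LE m n)) / real (n choose 2) \<le> 1"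
    and "1 - 1 / real (n choose 2) - \<alpha> * (1 - ln \<alpha>) / ln 2 \<le> log 2 (real (M_L LE m n)) / real (n choose 2)"
proof -
  define E where "E = all_edges n"
  define N where "N = card E"
  define M where "M = M_L LE m n"
  have fE: "finite E" unfolding E_def by (rule finite_all_edges)
  have NN: "N = n choose 2" unfolding N_def E_def all_edges_def using n_subsets[of "{1..n}" 2] by simp
  have N1: "N \<ge> 1" using n2 NN by (simp add: choose_two) (metis One_nat_def Suc_le_eq choose_two n2 zero_less_binomial_iff)
  define Bad where "Bad = {X\<in>Pow E. \<not> contains_subgraph X n m LE}"
  define Small where "Small = {H\<in>Pow E. real (card H) < \<alpha> * real N}"
  have GV1: "2 ^ N \<le> M * (card Bad + 1)" and GV2: "M \<le> 2 ^ N"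
    using GV[where LE=LE and m=m and n=n] unfolding M_def N_def Bad_def E_def by auto
  have BS: "Bad \<subseteq> Small"
  proof
    fix X assume X: "X \<in> Bad"
    then have "X \<subseteq> E" "\<not> contains_subgraph X n m LE" unfolding Bad_def by auto
    then have "\<not> \<alpha> * real N \<le> real (card X)" using dens NN unfolding E_def by auto
    then show "X \<in> Small" using \<open>X \<subseteq> E\<close> unfolding Small_def by auto
  qed
  have fS: "finite Small" unfolding Small_def using fE by simp
  have cBS: "card Bad \<le> card Small" using BS fS by (rule card_mono[rotated])
  have "{} \<in> Small" unfolding Small_def using a0 N1 by simp
  then have cS1: "card Small \<ge> 1" using fS by (metis One_nat_def Suc_leI card_gt_0_iff empty_iff)
  have sc: "real (card Small) * \<alpha> powr (\<alpha> * real N) \<le> exp (\<alpha> * real N)"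
    using small_count[OF fE a0 a1, of "\<alpha> * real N"] unfolding Small_def N_def by simp
  have "2 ^ N \<le> M * (2 * card Small)"
  proof -
    have "card Bad + 1 \<le> 2 * card Small" using cBS cS1 by linarith
    then show ?thesis using GV1 by (meson le_trans mult_le_mono2)
  qed
  then have "real (2 ^ N) \<le> real (M * (2 * card Small))" by (simp only: of_nat_le_iff)
  then have P0: "2 ^ N \<le> 2 * real M * real (card Small)" by simp
  have Mpos: "M > 0" using P0 by (metis mult_zero_right mult_zero_left of_nat_0 not_gr0 zero_less_power zero_less_numeral not_le)
  have ap: "\<alpha> powr (\<alpha> * real N) > 0" using a0 by simp
  have P: "2 ^ N * \<alpha> powr (\<alpha> * real N) \<le> 2 * real M * exp (\<alpha> * real N)"
  proof -
    have "2 ^ N * \<alpha> powr (\<alpha> * real N) \<le> 2 * real M * real (card Small) * \<alpha> powr (\<alpha> * real N)"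
      using P0 ap by (intro mult_right_mono) auto
    also have "\<dots> = 2 * real M * (real (card Small) * \<alpha> powr (\<alpha> * real N))" by simp
    also have "\<dots> \<le> 2 * real M * exp (\<alpha> * real N)" using sc Mpos by (intro mult_left_mono) auto
    finally show ?thesis .
  qed
  have "ln (2 ^ N * \<alpha> powr (\<alpha> * real N)) \<le> ln (2 * real M * exp (\<alpha> * real N))"
    using P ap Mpos by (subst ln_le_cancel_iff) auto
  then have L: "real N * ln 2 + \<alpha> * real N * ln \<alpha> \<le> ln 2 + ln (real M) + \<alpha> * real N"
    using ap Mpos a0 by (simp add: ln_mult ln_realpow)
  have l2: "ln (2::real) > 0" by simp
  have lg: "log 2 (real M) = ln (real M) / ln 2" by (simp add: log_def)
  have NR: "real N \<ge> 1" using N1 by simp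
  have "(1 - 1 / real N - \<alpha> * (1 - ln \<alpha>) / ln 2) * (real N * ln 2) = real N * ln 2 - ln 2 - \<alpha> * real N * (1 - ln \<alpha>)"
    using NR l2 by (simp add: field_simps)
  also have "\<dots> \<le> ln (real M)" using L by (simp add: algebra_simps)
  finally have "1 - 1 / real N - \<alpha> * (1 - ln \<alpha>) / ln 2 \<le> ln (real M) / (real N * ln 2)"
    using NR l2 by (simp add: field_simps)
  also have "\<dots> = log 2 (real M) / real N" using lg by simp
  finally show "1 - 1 / real (n choose 2) - \<alpha> * (1 - ln \<alpha>) / ln 2 \<le> log 2 (real (M_L LE m n)) / real (n choose 2)"
    using NN M_def by simp
  have "real M \<le> 2 ^ N" using GV2 by (metis of_nat_le_iff of_nat_numeral of_nat_power)
  then have "log 2 (real M) \<le> log 2 (2 ^ N)" using Mpos by (subst log_le_cancel_iff) auto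
  also have "\<dots> = real N" by (simp add: log_nat_power)
  finally show "log 2 (real (M_L LE m n)) / real (n choose 2) \<le> 1"
    using NN M_def NR by (simp add: divide_simps)
qed



theorem theorem1p6:
  fixes r :: nat and \<epsilon> :: real
    and m :: "nat \<Rightarrow> nat" and LE :: "nat \<Rightarrow> nat set set" and A B :: "nat \<Rightarrow> nat set"
  assumes "r > 0" and "\<epsilon> > 0"
    and "\<And>n. graph_on {0..<m n} (LE n)"
    and "\<And>n. connected_graph {0..<m n} (LE n)"
    and "\<And>n. bipartition {0..<m n} (LE n) (A n) (B n)"
    and "\<And>n a. a \<in> A n \<Longrightarrow> card {b \<in> B n. {a, b} \<in> LE n} \<le> r"
    and "(\<lambda>n. real (m n)) \<in> O(\<lambda>n. real n powr (1 - \<epsilon>))"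
  shows "(\<lambda>n. log 2 (real (M_L (LE n) (m n) n)) / real (n choose 2)) \<longlonglongrightarrow> 1"
proof -
  obtain C where C0: "C > 0"
    and evC: "eventually (\<lambda>n. norm (real (m n)) \<le> C * norm (real n powr (1 - \<epsilon>))) sequentially"
    using assms(7) by (elim landau_o.bigE)
  have mb: "eventually (\<lambda>n. real (m n) \<le> C * real n powr (1 - \<epsilon>)) sequentially"
    using evC by eventually_elim simp
  show ?thesis
  proof (rule tendstoI)
    fix e :: real assume e: "e > 0"
    obtain \<alpha> where a0: "0 < \<alpha>" and a1: "\<alpha> \<le> 1" and ga: "\<alpha> * (1 - ln \<alpha>) / ln 2 \<le> e / 4"
      using choose_param[OF e] by blast
    have dens: "eventually (\<lambda>n. \<forall>H. H \<subseteq> all_edges n \<longrightarrow> \<alpha> * real (n choose 2) \<le> real (card H)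
            \<longrightarrow> contains_subgraph H n (m n) (LE n)) sequentially"
      by (rule density[OF assms(2) a0 C0 assms(3) assms(5) assms(6) mb])
    have evn: "eventually (\<lambda>n. n \<ge> max 2 (nat \<lceil>4 / e\<rceil> + 1)) sequentially"
      by (rule eventually_ge_at_top)
    show "eventually (\<lambda>n. dist (log 2 (real (M_L (LE n) (m n) n)) / real (n choose 2)) 1 < e) sequentially"
      using dens evn
    proof eventually_elim
      case (elim n)
      then have n2: "n \<ge> 2" and nb: "n \<ge> nat \<lceil>4 / e\<rceil> + 1" by auto
      have up: "log 2 (real (M_L (LE n) (m n) n)) / real (n choose 2) \<le> 1"
        and lo: "1 - 1 / real (n choose 2) - \<alpha> * (1 - ln \<alpha>) / ln 2 \<le> log 2 (real (M_L (LE n) (m n) n)) / real (n choose 2)"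
        using final_bound[OF a0 a1 n2 elim(1)] by auto
      have "real (n choose 2) \<ge> real n - 1"
      proof -
        have "2 * real (n choose 2) = real n * (real n - 1)" by (rule two_choose)
        moreover have "real n * (real n - 1) \<ge> 2 * (real n - 1)" using n2 by (intro mult_right_mono) auto
        ultimately have "2 * (real n - 1) \<le> 2 * real (n choose 2)" by (simp only:)
        then show ?thesis by simp
      qed
      moreover have "real n - 1 \<ge> 4 / e" using nb by linarith
      ultimately have "real (n choose 2) \<ge> 4 / e" by linarith
      moreover have "4 / e > 0" using e by simp
      ultimately have Np: "real (n choose 2) > 0" by linarith
      have "1 / real (n choose 2) \<le> e / 4" using e Np \<open>real (n choose 2) \<ge> 4 / e\<close> by (simp add: field_simps)
      then have "dist (log 2 (real (M_L (LE n) (m n) n)) / real (n choose 2)) 1 \<le> e / 2"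
        using up lo ga by (simp add: dist_real_def abs_if)
      then show ?case using e by linarith
    qed
  qed
qed

end
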